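(* The model-theoretic semantics and the fixed-point semantics of $\mathcal{DL}_S$ are equivalent: for every $\mathcal{DL}_S$ program $P$, the least fixed point of the immediate consequence operator $\mathit{IC}_P$ equals the denotation $D(P)=\bigcap_{I\in\mathbf{M}(P)} I$, where $\mathbf{M}(P)$ is the set of all Herbrand models of $P$.
   Context: Fix a set $\mathit{Lit}$ of literals, a set of variables, and relation symbols, each with a fixed arity. Values: $\mathit{Val} ::= R(v_1,\ldots,v_n) \mid \ell$ with $R$ of arity $n$, $v_i\in\mathit{Val}$, $\ell\in\mathit{Lit}$. Facts are values of the form $R(v_1,\ldots,v_n)$ (possibly nested). Terms: $t ::= R(t_1,\ldots,t_n)\mid x \mid \ell$, $x$ a variable. A $\mathcal{DL}_S$ rule $R$ has a head clause $\mathit{Head}(R)=Q(t_1,\ldots,t_n)$ and a finite set $\mathit{Body}(R)$ of body clauses of the form $\mathit{id}=Q(t_1,\ldots,t_n)$ ($\mathit{id}$ a variable naming the matched fact); every head variable occurs in the body. A program $P$ is a finite set of rules. A substitution $\sigma$ maps variables to values; for a set of facts $I$, $\mathit{Body}(R)\sigma\subseteq I$ means that for each body clause $\mathit{id}=Q(\vec t)$, $Q(\vec t)\sigma\in I$ and $\sigma(\mathit{id})=Q(\vec t)\sigma$. $\mathit{subfact}(R(v_1,\ldots,v_n))=\{R(v_1,\ldots,v_n)\}\cup\bigcup_i\mathit{subfact}(v_i)$, $\mathit{subfact}(\ell)=\emptyset$ for literals; a set of facts $I$ is subfact-closed if $I=\bigcup\{\mathit{subfact}(f)\mid f\in I\}$.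 A database is a set of facts, ordered by inclusion. $\mathit{IC}_R(\mathit{db})=\mathit{db}\cup\bigcup\{\mathit{subfact}(\mathit{Head}(R)\sigma)\mid \mathit{Body}(R)\sigma\subseteq\mathit{db}\}$ and $\mathit{IC}_P(\mathit{db})=\mathit{db}\cup\bigcup_{R\in P}\mathit{IC}_R(\mathit{db})$; $\mathit{IC}_P$ is monotone, so it has a least fixed point. The Herbrand universe of $P$ is the set of all facts constructible from the relation symbols appearing in $P$ (and literals). A Herbrand interpretation is a subfact-closed subset $I$ of the Herbrand universe. $I\models R$ iff for every substitution $\sigma$, $\mathit{Body}(R)\sigma\subseteq I$ implies $\mathit{Head}(R)\sigma\in I$. A Herbrand model of $P$ is a Herbrand interpretation in which every rule of $P$ is true. *)

theory Defs
  imports Main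
begin

datatype ('r, 'l) val = Fact 'r "('r, 'l) val list" | Lit 'l

datatype ('r, 'l, 'v) trm = TFact 'r "('r, 'l, 'v) trm list" | Var 'v | TLit 'l

text \<open>A rule: head clause Q(t1..tn) and a set of body clauses id = Q(t1..tn).\<close>
datatype ('r, 'l, 'v) rule =
  Rule (head: "'r \<times> ('r, 'l, 'v) trm list")
       (body: "('v \<times> 'r \<times> ('r, 'l, 'v) trm list) set")

fun wf_val :: "('r \<Rightarrow> nat) \<Rightarrow> ('r, 'l) val \<Rightarrow> bool" where
  "wf_val ar (Fact R vs) = (length vs = ar R \<and> (\<forall>v\<in>set vs. wf_val ar v))"
| "wf_val ar (Lit l) = True"

fun wf_trm :: "('r \<Rightarrow> nat) \<Rightarrow> ('r, 'l, 'v) trm \<Rightarrow> bool" where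
  "wf_trm ar (TFact R ts) = (length ts = ar R \<and> (\<forall>t\<in>set ts. wf_trm ar t))"
| "wf_trm ar (Var x) = True"
| "wf_trm ar (TLit l) = True"

fun tvars :: "('r, 'l, 'v) trm \<Rightarrow> 'v set" where
  "tvars (TFact R ts) = (\<Union>t\<in>set ts. tvars t)"
| "tvars (Var x) = {x}"
| "tvars (TLit l) = {}"

fun trels :: "('r, 'l, 'v) trm \<Rightarrow> 'r set" where
  "trels (TFact R ts) = insert R (\<Union>t\<in>set ts. trels t)"
| "trels (Var x) = {}"
| "trels (TLit l) = {}"

fun tsubst :: "('v \<Rightarrow> ('r, 'l) val) \<Rightarrow> ('r, 'l, 'v) trm \<Rightarrow> ('r, 'l) val" where
  "tsubst \<sigma> (TFact R ts) = Fact R (map (tsubst \<sigma>) ts)"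
| "tsubst \<sigma> (Var x) = \<sigma> x"
| "tsubst \<sigma> (TLit l) = Lit l"

fun subfact :: "('r, 'l) val \<Rightarrow> ('r, 'l) val set" where
  "subfact (Fact R vs) = insert (Fact R vs) (\<Union>v\<in>set vs. subfact v)"
| "subfact (Lit l) = {}"

definition subfact_closed :: "('r, 'l) val set \<Rightarrow> bool" where
  "subfact_closed I \<longleftrightarrow> I = \<Union> (subfact ` I)"

definition clause_inst :: "('v \<Rightarrow> ('r, 'l) val) \<Rightarrow> 'r \<times> ('r, 'l, 'v) trm list \<Rightarrow> ('r, 'l) val" where
  "clause_inst \<sigma> c = Fact (fst c) (map (tsubst \<sigma>) (snd c))"

definition wf_subst :: "('r \<Rightarrow> nat) \<Rightarrow> ('v \<Rightarrow> ('r, 'l) val) \<Rightarrow> bool" where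
  "wf_subst ar \<sigma> \<longleftrightarrow> (\<forall>x. wf_val ar (\<sigma> x))"

definition body_sat :: "('v \<Rightarrow> ('r, 'l) val) \<Rightarrow> ('v \<times> 'r \<times> ('r, 'l, 'v) trm list) set
    \<Rightarrow> ('r, 'l) val set \<Rightarrow> bool" where
  "body_sat \<sigma> B I \<longleftrightarrow>
     (\<forall>(i, Q, ts) \<in> B. clause_inst \<sigma> (Q, ts) \<in> I \<and> \<sigma> i = clause_inst \<sigma> (Q, ts))"

definition IC_R :: "('r \<Rightarrow> nat) \<Rightarrow> ('r, 'l, 'v) rule \<Rightarrow> ('r, 'l) val set \<Rightarrow> ('r, 'l) val set" where
  "IC_R ar R db = db \<union>
     \<Union> {subfact (clause_inst \<sigma> (head R)) | \<sigma>. wf_subst ar \<sigma> \<and> body_sat \<sigma> (body R) db}"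

definition IC_P :: "('r \<Rightarrow> nat) \<Rightarrow> ('r, 'l, 'v) rule set \<Rightarrow> ('r, 'l) val set \<Rightarrow> ('r, 'l) val set" where
  "IC_P ar P db = db \<union> (\<Union>R\<in>P. IC_R ar R db)"

definition body_vars :: "('v \<times> 'r \<times> ('r, 'l, 'v) trm list) set \<Rightarrow> 'v set" where
  "body_vars B = (\<Union>(i, Q, ts) \<in> B. insert i (\<Union>t\<in>set ts. tvars t))"

definition rule_rels :: "('r, 'l, 'v) rule \<Rightarrow> 'r set" where
  "rule_rels R = insert (fst (head R)) (\<Union>t\<in>set (snd (head R)). trels t)
      \<union> (\<Union>(i, Q, ts) \<in> body R. insert Q (\<Union>t\<in>set ts. trels t))"

definition prog_rels :: "('r, 'l, 'v) rule set \<Rightarrow> 'r set" where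
  "prog_rels P = (\<Union>R\<in>P. rule_rels R)"

definition clause_wf :: "('r \<Rightarrow> nat) \<Rightarrow> 'r \<times> ('r, 'l, 'v) trm list \<Rightarrow> bool" where
  "clause_wf ar c \<longleftrightarrow> length (snd c) = ar (fst c) \<and> (\<forall>t\<in>set (snd c). wf_trm ar t)"

definition wf_rule :: "('r \<Rightarrow> nat) \<Rightarrow> ('r, 'l, 'v) rule \<Rightarrow> bool" where
  "wf_rule ar R \<longleftrightarrow> clause_wf ar (head R) \<and> finite (body R)
     \<and> (\<forall>(i, Q, ts) \<in> body R. clause_wf ar (Q, ts))
     \<and> (\<Union>t\<in>set (snd (head R)). tvars t) \<subseteq> body_vars (body R)"

definition wf_program :: "('r \<Rightarrow> nat) \<Rightarrow> ('r, 'l, 'v) rule set \<Rightarrow> bool" where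
  "wf_program ar P \<longleftrightarrow> finite P \<and> (\<forall>R\<in>P. wf_rule ar R)"

inductive_set herbrand_universe :: "('r \<Rightarrow> nat) \<Rightarrow> ('r, 'l, 'v) rule set \<Rightarrow> ('r, 'l) val set"
  for ar P where
  "\<lbrakk> R \<in> prog_rels P; length vs = ar R;
     \<forall>v\<in>set vs. (\<exists>l. v = Lit l) \<or> v \<in> herbrand_universe ar P \<rbrakk>
   \<Longrightarrow> Fact R vs \<in> herbrand_universe ar P"

definition herbrand_interp :: "('r \<Rightarrow> nat) \<Rightarrow> ('r, 'l, 'v) rule set \<Rightarrow> ('r, 'l) val set \<Rightarrow> bool" where
  "herbrand_interp ar P I \<longleftrightarrow> I \<subseteq> herbrand_universe ar P \<and> subfact_closed I"

definition rule_true :: "('r \<Rightarrow> nat) \<Rightarrow> ('r, 'l) val set \<Rightarrow> ('r, 'l, 'v) rule \<Rightarrow> bool" where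
  "rule_true ar I R \<longleftrightarrow>
     (\<forall>\<sigma>. wf_subst ar \<sigma> \<longrightarrow> body_sat \<sigma> (body R) I \<longrightarrow> clause_inst \<sigma> (head R) \<in> I)"

definition herbrand_model :: "('r \<Rightarrow> nat) \<Rightarrow> ('r, 'l, 'v) rule set \<Rightarrow> ('r, 'l) val set \<Rightarrow> bool" where
  "herbrand_model ar P I \<longleftrightarrow> herbrand_interp ar P I \<and> (\<forall>R\<in>P. rule_true ar I R)"

definition models :: "('r \<Rightarrow> nat) \<Rightarrow> ('r, 'l, 'v) rule set \<Rightarrow> ('r, 'l) val set set" where
  "models ar P = {I. herbrand_model ar P I}"

definition denotation :: "('r \<Rightarrow> nat) \<Rightarrow> ('r, 'l, 'v) rule set \<Rightarrow> ('r, 'l) val set" where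
  "denotation ar P = \<Inter> (models ar P)"

end

theory Submission
  imports Defs
begin

lemma subfact_Fact: "y \<in> subfact x \<Longrightarrow> \<exists>R vs. y = Fact R vs"
  by (induction x rule: subfact.induct) auto

lemma subfact_trans: "y \<in> subfact x \<Longrightarrow> subfact y \<subseteq> subfact x"
  by (induction x rule: subfact.induct) auto

lemma HU_args: "Fact R vs \<in> herbrand_universe ar P \<Longrightarrow> v \<in> set vs \<Longrightarrow>
   (\<exists>l. v = Lit l) \<or> v \<in> herbrand_universe ar P"
  by (erule herbrand_universe.cases) auto

lemma HU_subfact: "x \<in> herbrand_universe ar P \<Longrightarrow> subfact x \<subseteq> herbrand_universe ar P"
proof (induction x rule: subfact.induct)
  case (1 R vs)
  show ?case
  proof
    fix y assume "y \<in> subfact (Fact R vs)"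
    then consider "y = Fact R vs" | v where "v \<in> set vs" "y \<in> subfact v" by auto
    then show "y \<in> herbrand_universe ar P"
    proof cases
      case 1 then show ?thesis using "1.prems" by simp
    next
      case 2
      from HU_args[OF "1.prems" 2(1)] show ?thesis
      proof
        assume "\<exists>l. v = Lit l" then show ?thesis using 2 by auto
      next
        assume "v \<in> herbrand_universe ar P"
        then show ?thesis using "1.IH"[OF 2(1)] 2(2) by blast
      qed
    qed
  qed
qed simp

lemma tsubst_var_HU: "(\<exists>l. tsubst \<sigma> t = Lit l) \<or> tsubst \<sigma> t \<in> herbrand_universe ar P \<Longrightarrow>
   x \<in> tvars t \<Longrightarrow> (\<exists>l. \<sigma> x = Lit l) \<or> \<sigma> x \<in> herbrand_universe ar P"
proof (induction t)
  case (TFact R ts)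
  then obtain t where t: "t \<in> set ts" "x \<in> tvars t" by auto
  have "Fact R (map (tsubst \<sigma>) ts) \<in> herbrand_universe ar P" using TFact.prems by auto
  from HU_args[OF this] t(1) have "(\<exists>l. tsubst \<sigma> t = Lit l) \<or> tsubst \<sigma> t \<in> herbrand_universe ar P"
    by auto
  then show ?case using TFact.IH t by blast
qed auto

lemma tsubst_HU: "wf_trm ar t \<Longrightarrow> trels t \<subseteq> prog_rels P \<Longrightarrow>
   (\<forall>x\<in>tvars t. (\<exists>l. \<sigma> x = Lit l) \<or> \<sigma> x \<in> herbrand_universe ar P) \<Longrightarrow>
   (\<exists>l. tsubst \<sigma> t = Lit l) \<or> tsubst \<sigma> t \<in> herbrand_universe ar P"
proof (induction t)
  case (TFact R ts)
  have "Fact R (map (tsubst \<sigma>) ts) \<in> herbrand_universe ar P"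
  proof (rule herbrand_universe.intros)
    show "\<forall>v\<in>set (map (tsubst \<sigma>) ts). (\<exists>l. v = Lit l) \<or> v \<in> herbrand_universe ar P"
    proof
      fix v assume "v \<in> set (map (tsubst \<sigma>) ts)"
      then obtain t where t: "t \<in> set ts" "v = tsubst \<sigma> t" by auto
      have "wf_trm ar t" "trels t \<subseteq> prog_rels P"
        "\<forall>x\<in>tvars t. (\<exists>l. \<sigma> x = Lit l) \<or> \<sigma> x \<in> herbrand_universe ar P"
        using TFact.prems t by auto
      then show "(\<exists>l. v = Lit l) \<or> v \<in> herbrand_universe ar P" using TFact.IH[OF t(1)] t(2) by blast
    qed
  qed (use TFact.prems in auto)
  then show ?case by simp
qed auto

lemma head_HU:
  assumes P: "wf_program ar P" and R: "R \<in> P" and I: "I \<subseteq> herbrand_universe ar P"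
    and b: "body_sat \<sigma> (body R) I"
  shows "clause_inst \<sigma> (head R) \<in> herbrand_universe ar P"
proof -
  have wr: "wf_rule ar R" using P R by (auto simp: wf_program_def)
  have rr: "rule_rels R \<subseteq> prog_rels P" using R by (auto simp: prog_rels_def)
  have bv: "(\<exists>l. \<sigma> x = Lit l) \<or> \<sigma> x \<in> herbrand_universe ar P" if x: "x \<in> body_vars (body R)" for x
  proof -
    from x obtain i Q ts where c: "(i, Q, ts) \<in> body R" and
      xx: "x = i \<or> (\<exists>t\<in>set ts. x \<in> tvars t)" unfolding body_vars_def by blast
    from b c have ci: "clause_inst \<sigma> (Q, ts) \<in> I" "\<sigma> i = clause_inst \<sigma> (Q, ts)"
      unfolding body_sat_def by auto
    from xx show ?thesis
    proof
      assume "x = i" then show ?thesis using ci I by auto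
    next
      assume "\<exists>t\<in>set ts. x \<in> tvars t"
      then obtain t where t: "t \<in> set ts" "x \<in> tvars t" by blast
      have "Fact Q (map (tsubst \<sigma>) ts) \<in> herbrand_universe ar P"
        using ci I by (auto simp: clause_inst_def)
      from HU_args[OF this] t(1)
      have "(\<exists>l. tsubst \<sigma> t = Lit l) \<or> tsubst \<sigma> t \<in> herbrand_universe ar P" by auto
      from tsubst_var_HU[OF this t(2)] show ?thesis .
    qed
  qed
  obtain Hr hts where h: "head R = (Hr, hts)" by fastforce
  show ?thesis unfolding clause_inst_def h
  proof (simp, rule herbrand_universe.intros)
    show "Hr \<in> prog_rels P" using rr h by (auto simp: rule_rels_def)
    show "length (map (tsubst \<sigma>) hts) = ar Hr" using wr h by (auto simp: wf_rule_def clause_wf_def)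
    show "\<forall>v\<in>set (map (tsubst \<sigma>) hts). (\<exists>l. v = Lit l) \<or> v \<in> herbrand_universe ar P"
    proof
      fix v assume "v \<in> set (map (tsubst \<sigma>) hts)"
      then obtain t where t: "t \<in> set hts" "v = tsubst \<sigma> t" by auto
      have "wf_trm ar t" using wr h t by (auto simp: wf_rule_def clause_wf_def)
      moreover have "trels t \<subseteq> prog_rels P" using rr h t by (auto simp: rule_rels_def)
      moreover have "\<forall>x\<in>tvars t. (\<exists>l. \<sigma> x = Lit l) \<or> \<sigma> x \<in> herbrand_universe ar P"
      proof
        fix x assume "x \<in> tvars t"
        then have "x \<in> body_vars (body R)" using wr h t by (auto simp: wf_rule_def)
        then show "(\<exists>l. \<sigma> x = Lit l) \<or> \<sigma> x \<in> herbrand_universe ar P" by (rule bv)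
      qed
      ultimately show "(\<exists>l. v = Lit l) \<or> v \<in> herbrand_universe ar P" using tsubst_HU t by blast
    qed
  qed
qed

lemma body_sat_mono: "body_sat \<sigma> B I \<Longrightarrow> I \<subseteq> J \<Longrightarrow> body_sat \<sigma> B J"
  unfolding body_sat_def by blast

lemma mono_IC:
  fixes ar :: "'r \<Rightarrow> nat" and P :: "('r, 'l, 'v) rule set"
  shows "mono (IC_P ar P)"
proof (rule monoI)
  fix A B :: "('r, 'l) val set" assume AB: "A \<subseteq> B"
  have "IC_R ar R A \<subseteq> IC_R ar R B" for R :: "('r, 'l, 'v) rule"
    unfolding IC_R_def using AB body_sat_mono[OF _ AB] by blast
  then show "IC_P ar P A \<subseteq> IC_P ar P B" unfolding IC_P_def using AB by blast
qed

lemma model_closed: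
  assumes "herbrand_model ar P M" shows "IC_P ar P M \<subseteq> M"
proof -
  have sc: "M = \<Union>(subfact ` M)" using assms by (auto simp: herbrand_model_def herbrand_interp_def subfact_closed_def)
  have "subfact x \<subseteq> M" if "x \<in> M" for x
    using sc that subfact_trans by blast
  then show ?thesis using assms
    unfolding IC_P_def IC_R_def herbrand_model_def rule_true_def by blast
qed

lemma HU_model:
  assumes P: "wf_program ar P"
  shows "herbrand_model ar P (herbrand_universe ar P)"
proof -
  have "subfact_closed (herbrand_universe ar P)"
    unfolding subfact_closed_def
  proof
    show "herbrand_universe ar P \<subseteq> \<Union> (subfact ` herbrand_universe ar P)"
    proof
      fix x assume x: "x \<in> herbrand_universe ar P"
      then have "x \<in> subfact x" by (cases rule: herbrand_universe.cases) auto
      then show "x \<in> \<Union> (subfact ` herbrand_universe ar P)" using x by blast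
    qed
    show "\<Union> (subfact ` herbrand_universe ar P) \<subseteq> herbrand_universe ar P"
      using HU_subfact by blast
  qed
  then show ?thesis
    unfolding herbrand_model_def herbrand_interp_def rule_true_def
    using head_HU[OF P] by blast
qed

theorem mainTheorem5:
  fixes ar :: "'r \<Rightarrow> nat" and P :: "('r, 'l, 'v) rule set"
  assumes "wf_program ar P"
  shows "lfp (IC_P ar P) = denotation ar P"
proof -
  let ?L = "lfp (IC_P ar P)"
  have unf: "?L = IC_P ar P ?L" using lfp_unfold[OF mono_IC] .
  have low: "?L \<subseteq> M" if "herbrand_model ar P M" for M
    using lfp_lowerbound model_closed[OF that] by blast
  have LHU: "?L \<subseteq> herbrand_universe ar P" using low HU_model[OF assms] .
  define S where "S = {x. x \<in> ?L \<and> (\<exists>R vs. x = Fact R vs) \<and> subfact x \<subseteq> ?L}"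
  have "IC_P ar P S \<subseteq> S"
  proof
    fix x assume x: "x \<in> IC_P ar P S"
    have "S \<subseteq> ?L" unfolding S_def by blast
    then have xL: "IC_P ar P S \<subseteq> ?L" using mono_IC unf by (metis monoD)
    show "x \<in> S"
    proof (cases "x \<in> S")
      case False
      then obtain R \<sigma> where "R \<in> P" "wf_subst ar \<sigma>" "body_sat \<sigma> (body R) S"
        "x \<in> subfact (clause_inst \<sigma> (head R))"
        using x unfolding IC_P_def IC_R_def by blast
      moreover have "subfact (clause_inst \<sigma> (head R)) \<subseteq> IC_P ar P S"
        using calculation unfolding IC_P_def IC_R_def by blast
      ultimately have a: "x \<in> subfact (clause_inst \<sigma> (head R))"
         and b: "subfact (clause_inst \<sigma> (head R)) \<subseteq> ?L" using xL by blast+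
      have "x \<in> ?L" using a b by blast
      moreover have "subfact x \<subseteq> ?L" using subfact_trans[OF a] b by blast
      moreover have "\<exists>R vs. x = Fact R vs" using subfact_Fact[OF a] .
      ultimately show ?thesis unfolding S_def by blast
    qed simp
  qed
  then have LS: "?L \<subseteq> S" by (rule lfp_lowerbound)
  have "subfact_closed ?L" unfolding subfact_closed_def
  proof
    show "?L \<subseteq> \<Union> (subfact ` ?L)"
    proof
      fix x assume x: "x \<in> ?L"
      then obtain R vs where "x = Fact R vs" using LS unfolding S_def by blast
      then have "x \<in> subfact x" by simp
      then show "x \<in> \<Union> (subfact ` ?L)" using x by blast
    qed
    show "\<Union> (subfact ` ?L) \<subseteq> ?L" using LS unfolding S_def by blast
  qed
  moreover have "\<forall>R\<in>P. rule_true ar ?L R"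
    unfolding rule_true_def
  proof (intro ballI allI impI)
    fix R \<sigma> assume "R \<in> P" "wf_subst ar \<sigma>" "body_sat \<sigma> (body R) ?L"
    then have "subfact (clause_inst \<sigma> (head R)) \<subseteq> IC_P ar P ?L"
      unfolding IC_P_def IC_R_def by blast
    moreover have "clause_inst \<sigma> (head R) \<in> subfact (clause_inst \<sigma> (head R))"
      by (simp add: clause_inst_def)
    ultimately show "clause_inst \<sigma> (head R) \<in> ?L" using unf by blast
  qed
  ultimately have "herbrand_model ar P ?L"
    using LHU by (simp add: herbrand_model_def herbrand_interp_def)
  then show ?thesis using low unfolding denotation_def models_def by blast
qed

end
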